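(* Let $k\ge2$ be an integer and let $n\ge4k-2$ be an even integer. Let $P$ be the property of being $k$-edge-connected. Then the number of $(P,n)$-sinks, i.e. $|S(P,n)|$, is at least $p(k-1)$, where $p$ denotes the integer partition function.
   Context: Graphs are finite and simple. A graphical sequence of length $n$ is a nondecreasing integer sequence that is the degree sequence of some graph (a realization). For nondecreasing sequences, $\pi'\ge\pi$ ($\pi'$ majorizes $\pi$) means termwise $\ge$. A graphical sequence is forcibly $P$ if every realization has property $P$. Let $G_n$ be the poset of graphical sequences of length $n$ under majorization and $\overline{P_n}$ the subposet of those not forcibly $P$; $S(P,n)$ is the set of maximal elements of $\overline{P_n}$. $p(r)$ is the number of partitions of the integer $r$. *)

theory Defs
  imports Main
begin

definition simple_graph :: "nat \<Rightarrow> nat set set \<Rightarrow> bool" where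
  "simple_graph n E \<longleftrightarrow> (\<forall>e\<in>E. \<exists>u v. u < n \<and> v < n \<and> u \<noteq> v \<and> e = {u, v})"

definition degree :: "nat set set \<Rightarrow> nat \<Rightarrow> nat" where
  "degree E v = card {e\<in>E. v \<in> e}"

definition connected_graph :: "nat \<Rightarrow> nat set set \<Rightarrow> bool" where
  "connected_graph n E \<longleftrightarrow>
     (\<forall>u<n. \<forall>v<n. (\<lambda>x y. {x, y} \<in> E)\<^sup>*\<^sup>* u v)"

definition k_edge_connected :: "nat \<Rightarrow> nat \<Rightarrow> nat set set \<Rightarrow> bool" where
  "k_edge_connected k n E \<longleftrightarrow>
     (\<forall>F \<subseteq> E. card F < k \<longrightarrow> connected_graph n (E - F))"

definition realizes :: "nat set set \<Rightarrow> nat list \<Rightarrow> bool" where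
  "realizes E d \<longleftrightarrow> simple_graph (length d) E \<and> (\<forall>i < length d. degree E i = d ! i)"

definition graphical :: "nat \<Rightarrow> nat list \<Rightarrow> bool" where
  "graphical n d \<longleftrightarrow> length d = n \<and> sorted d \<and> (\<exists>E. realizes E d)"

definition majorizes :: "nat list \<Rightarrow> nat list \<Rightarrow> bool" where
  "majorizes d' d \<longleftrightarrow> length d' = length d \<and> (\<forall>i < length d. d ! i \<le> d' ! i)"

definition forcibly :: "(nat \<Rightarrow> nat set set \<Rightarrow> bool) \<Rightarrow> nat list \<Rightarrow> bool" where
  "forcibly P d \<longleftrightarrow> (\<forall>E. realizes E d \<longrightarrow> P (length d) E)"

definition sinks :: "(nat \<Rightarrow> nat set set \<Rightarrow> bool) \<Rightarrow> nat \<Rightarrow> nat list set" where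
  "sinks P n = {d. graphical n d \<and> \<not> forcibly P d \<and>
      \<not> (\<exists>d'. graphical n d' \<and> \<not> forcibly P d' \<and> d' \<noteq> d \<and> majorizes d' d)}"

definition partition_count :: "nat \<Rightarrow> nat" where
  "partition_count r = card {xs :: nat list. sorted xs \<and> (\<forall>x\<in>set xs. 0 < x) \<and> sum_list xs = r}"

end

theory Submission
  imports Defs
begin


definition nbrs :: "nat set set \<Rightarrow> nat \<Rightarrow> nat set" where
  "nbrs E v = {u. {v,u} \<in> E}"

lemma sg_finite:
  assumes "simple_graph n E" shows "finite E" "card E \<le> n * n"
proof -
  have sub: "E \<subseteq> (\<lambda>(u,v). {u,v}) ` ({..<n} \<times> {..<n})"
    using assms unfolding simple_graph_def by fastforce
  show "finite E" using sub finite_subset by blast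
  have "card E \<le> card ((\<lambda>(u,v). {u,v}) ` ({..<n} \<times> {..<n}))"
    using sub by (intro card_mono) auto
  also have "\<dots> \<le> card ({..<n} \<times> {..<n})" by (rule card_image_le) auto
  finally show "card E \<le> n * n" by simp
qed

lemma degree_nbrs:
  assumes "simple_graph n E" shows "degree E v = card (nbrs E v)"
proof -
  have "{e\<in>E. v\<in>e} = (\<lambda>u. {v,u}) ` nbrs E v"
  proof
    show "{e\<in>E. v\<in>e} \<subseteq> (\<lambda>u. {v,u}) ` nbrs E v"
    proof
      fix e assume e: "e \<in> {e\<in>E. v\<in>e}"
      then obtain a b where ab: "e = {a,b}" using assms unfolding simple_graph_def by blast
      show "e \<in> (\<lambda>u. {v,u}) ` nbrs E v"
      proof (cases "v = a")
        case True then show ?thesis using e ab unfolding nbrs_def by auto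
      next
        case False then have "v = b" using e ab by auto
        then show ?thesis using e ab unfolding nbrs_def by (auto simp: insert_commute)
      qed
    qed
  qed (auto simp: nbrs_def)
  moreover have "inj_on (\<lambda>u. {v,u}) (nbrs E v)"
    by (auto simp: inj_on_def doubleton_eq_iff)
  ultimately show ?thesis unfolding degree_def by (simp add: card_image)
qed

lemma nbrs_sub:
  assumes "simple_graph n E" shows "nbrs E v \<subseteq> {..<n}" "v \<notin> nbrs E v"
proof -
  show "nbrs E v \<subseteq> {..<n}"
  proof
    fix u assume "u \<in> nbrs E v"
    then have "{v,u} \<in> E" by (simp add: nbrs_def)
    then obtain a b where "a < n" "b < n" "{v,u} = {a,b}" using assms unfolding simple_graph_def by blast
    then show "u \<in> {..<n}" by (auto simp: doubleton_eq_iff)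
  qed
  show "v \<notin> nbrs E v"
  proof
    assume "v \<in> nbrs E v"
    then have "{v} \<in> E" by (simp add: nbrs_def)
    then obtain a b where "a \<noteq> b" "{v} = {a,b}" using assms unfolding simple_graph_def by blast
    then show False by (metis doubleton_eq_iff insert_absorb2)
  qed
qed



lemma cross_sum:
  assumes "finite S" "finite T" "S \<inter> T = {}" "finite F"
    and "\<forall>x\<in>S. \<forall>y\<in>T. {x,y} \<in> E \<longrightarrow> {x,y} \<in> F"
  shows "(\<Sum>w\<in>S. card (nbrs E w \<inter> T)) \<le> card F"
proof -
  have "(\<Sum>w\<in>S. card (nbrs E w \<inter> T)) = card (SIGMA w:S. nbrs E w \<inter> T)"
    using assms by simp
  also have "\<dots> \<le> card F"
  proof (rule card_inj_on_le[where f="\<lambda>(w,y). {w,y}"])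
    show "inj_on (\<lambda>(w,y). {w,y}) (SIGMA w:S. nbrs E w \<inter> T)"
      using assms(3) by (auto simp: inj_on_def doubleton_eq_iff)
    show "(\<lambda>(w,y). {w,y}) ` (SIGMA w:S. nbrs E w \<inter> T) \<subseteq> F"
      using assms(5) by (auto simp: nbrs_def)
  qed (use assms in auto)
  finally show ?thesis .
qed


lemma deg_side:
  assumes "simple_graph n E" "S \<subseteq> {..<n}" "w \<in> S"
  shows "card (nbrs E w) \<le> card S - 1 + card (nbrs E w \<inter> ({..<n} - S))"
proof -
  have fS: "finite S" using assms(2) finite_subset by blast
  have "nbrs E w \<subseteq> (S - {w}) \<union> (nbrs E w \<inter> ({..<n} - S))"
    using nbrs_sub[OF assms(1), of w] by auto
  then have "card (nbrs E w) \<le> card ((S - {w}) \<union> (nbrs E w \<inter> ({..<n} - S)))"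
    by (intro card_mono) (use fS in auto)
  also have "\<dots> \<le> card (S - {w}) + card (nbrs E w \<inter> ({..<n} - S))" by (rule card_Un_le)
  finally show ?thesis using fS assms(3) by simp
qed


lemma eq_from_sum:
  fixes d d' :: "nat list"
  assumes "length d = n" "length d' = n" "\<forall>i<n. d!i \<le> d'!i" "sum_list d' \<le> sum_list d"
  shows "d' = d"
proof (rule ccontr)
  assume ne: "d' \<noteq> d"
  have "\<exists>i<n. d!i \<noteq> d'!i"
  proof (rule ccontr)
    assume "\<not> (\<exists>i<n. d!i \<noteq> d'!i)"
    then have "d' = d" using assms(1,2) by (intro nth_equalityI) auto
    then show False using ne by simp
  qed
  then obtain i where i: "i < n" "d!i \<noteq> d'!i" by blast
  have "(\<Sum>i\<in>{0..<n}. d!i) < (\<Sum>i\<in>{0..<n}. d'!i)"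
  proof (rule sum_strict_mono_ex1)
    show "\<forall>x\<in>{0..<n}. d!x \<le> d'!x" using assms(3) by simp
    show "\<exists>a\<in>{0..<n}. d!a < d'!a" using i assms(3) by (intro bexI[of _ i]) (auto simp: le_neq_implies_less)
  qed simp
  then show False using assms by (simp add: sum_list_sum_nth)
qed

lemma prod_bound:
  fixes s h :: nat assumes "1 \<le> s" "s < h" shows "h - 1 \<le> s * (h - s)"
proof -
  define a where "a = s - 1"
  define b where "b = h - s - 1"
  have a: "s = 1 + a" using assms by (simp add: a_def)
  have b: "h - s = 1 + b" using assms by (simp add: b_def)
  have "s * (h - s) = (1 + a) * (1 + b)" using a b by simp
  also have "\<dots> = 1 + a + b + a * b" by (simp add: algebra_simps)
  finally have e: "s * (h - s) = 1 + a + b + a * b" .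
  have "h = 2 + a + b" using a b assms by simp
  then show ?thesis using e by simp
qed



lemma upper:
  fixes n K h :: nat and d d' :: "nat list"
  assumes nh: "n = 2*h" and hK: "h \<ge> 2*K+1" and K1: "K \<ge> 1"
    and ld: "length d = n" and lowd: "\<forall>i<n. h-1 \<le> d!i" and sd: "sum_list d = n*(h-1) + 2*K"
    and re: "realizes E d'" and ld': "length d' = n"
    and FE: "F \<subseteq> E" and cF: "card F \<le> K" and nc: "\<not> connected_graph n (E - F)"
    and maj: "\<forall>i<n. d!i \<le> d'!i"
  shows "d' = d"
proof -
  have sg: "simple_graph n E" using re ld' by (simp add: realizes_def)
  have degE: "\<And>w. w < n \<Longrightarrow> d'!w = card (nbrs E w)"
    using re ld' degree_nbrs[OF sg] by (simp add: realizes_def)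
  have fF: "finite F" using sg_finite(1)[OF sg] FE finite_subset by blast
  define R where "R = (\<lambda>x y. {x, y} \<in> E - F)\<^sup>*\<^sup>*"
  obtain u v where uv: "u < n" "v < n" "\<not> R u v" using nc unfolding connected_graph_def R_def by blast
  define S where "S = {w. w < n \<and> R u w}"
  define T where "T = {..<n} - S"
  have SS: "S \<subseteq> {..<n}" by (auto simp: S_def)
  have fS: "finite S" "finite T" using SS finite_subset by (auto simp: T_def)
  have dST: "S \<inter> T = {}" "T \<inter> S = {}" by (auto simp: T_def)
  have uS: "u \<in> S" using uv by (auto simp: S_def R_def)
  have vT: "v \<in> T" using uv by (auto simp: S_def T_def)
  have cr: "\<forall>x\<in>S. \<forall>y\<in>T. {x,y} \<in> E \<longrightarrow> {x,y} \<in> F"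
  proof (intro ballI impI)
    fix x y assume x: "x \<in> S" and y: "y \<in> T" and e: "{x,y} \<in> E"
    show "{x,y} \<in> F"
    proof (rule ccontr)
      assume "{x,y} \<notin> F"
      then have "R u y" using x e unfolding S_def R_def
        by (auto intro: rtranclp.rtrancl_into_rtrancl)
      then show False using y by (auto simp: S_def T_def)
    qed
  qed
  have cr': "\<forall>x\<in>T. \<forall>y\<in>S. {x,y} \<in> E \<longrightarrow> {x,y} \<in> F"
    using cr by (metis insert_commute)
  have sumS: "(\<Sum>w\<in>S. card (nbrs E w \<inter> T)) \<le> K"
    using cross_sum[OF fS dST(1) fF cr] cF by linarith
  have sumT: "(\<Sum>w\<in>T. card (nbrs E w \<inter> S)) \<le> K"
    using cross_sum[OF fS(2) fS(1) dST(2) fF cr'] cF by linarith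
  have TT: "T \<subseteq> {..<n}" by (auto simp: T_def)
  have TS: "{..<n} - T = S" using SS by (auto simp: T_def)
  have degS: "\<And>w. w \<in> S \<Longrightarrow> d'!w \<le> card S - 1 + card (nbrs E w \<inter> T)"
  proof -
    fix w assume w: "w \<in> S"
    then have "w < n" using SS by auto
    then have "d'!w = card (nbrs E w)" by (rule degE)
    also have "\<dots> \<le> card S - 1 + card (nbrs E w \<inter> ({..<n} - S))" by (rule deg_side[OF sg SS w])
    finally show "d'!w \<le> card S - 1 + card (nbrs E w \<inter> T)" by (simp only: T_def)
  qed
  have degT: "\<And>w. w \<in> T \<Longrightarrow> d'!w \<le> card T - 1 + card (nbrs E w \<inter> S)"
  proof -
    fix w assume w: "w \<in> T"
    then have "w < n" using TT by auto
    then have "d'!w = card (nbrs E w)" by (rule degE)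
    also have "\<dots> \<le> card T - 1 + card (nbrs E w \<inter> ({..<n} - T))" by (rule deg_side[OF sg TT w])
    finally show "d'!w \<le> card T - 1 + card (nbrs E w \<inter> S)" by (simp only: TS)
  qed
  have "card S \<le> n" using card_mono[OF _ SS] by simp
  then have cST: "card S + card T = n" using SS fS unfolding T_def by (simp add: card_Diff_subset)
  have low': "\<And>w. w < n \<Longrightarrow> h - 1 \<le> d'!w" using lowd maj le_trans by blast
  have big: "\<And>A B. A \<subseteq> {..<n} \<Longrightarrow> finite A \<Longrightarrow> A \<noteq> {} \<Longrightarrow>
      (\<forall>w\<in>A. d'!w \<le> card A - 1 + card (nbrs E w \<inter> B)) \<Longrightarrow>
      (\<Sum>w\<in>A. card (nbrs E w \<inter> B)) \<le> K \<Longrightarrow> card A \<ge> h"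
  proof (rule ccontr)
    fix A B assume A: "A \<subseteq> {..<n}" "finite A" "A \<noteq> {}"
      and dg: "\<forall>w\<in>A. d'!w \<le> card A - 1 + card (nbrs E w \<inter> B)"
      and sm: "(\<Sum>w\<in>A. card (nbrs E w \<inter> B)) \<le> K" and lt: "\<not> card A \<ge> h"
    have c1: "card A \<ge> 1" using A by (simp add: Suc_le_eq card_gt_0_iff)
    have "\<forall>w\<in>A. h - card A \<le> card (nbrs E w \<inter> B)"
    proof
      fix w assume "w \<in> A"
      then have "h - 1 \<le> card A - 1 + card (nbrs E w \<inter> B)" using dg low' A by force
      then show "h - card A \<le> card (nbrs E w \<inter> B)" using c1 by linarith
    qed
    then have "card A * (h - card A) \<le> (\<Sum>w\<in>A. card (nbrs E w \<inter> B))"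
      using sum_bounded_below[of A "h - card A" "\<lambda>w. card (nbrs E w \<inter> B)"] by simp
    moreover have "h - 1 \<le> card A * (h - card A)" using prod_bound c1 lt by simp
    ultimately show False using sm hK K1 by linarith
  qed
  have hS: "card S \<ge> h" using big[OF SS fS(1) _ _ sumS] uS degS by blast
  have hT: "card T \<ge> h" using big[OF TT fS(2) _ _ sumT] vT degT by blast
  have eS: "card S = h" "card T = h" using hS hT cST nh by auto
  define cc where "cc w = (if w \<in> S then card (nbrs E w \<inter> T) else card (nbrs E w \<inter> S))" for w
  have bnd: "\<And>w. w < n \<Longrightarrow> d'!w \<le> (h - 1) + cc w"
  proof -
    fix w assume w: "w < n"
    show "d'!w \<le> (h - 1) + cc w"
    proof (cases "w \<in> S")
      case True then show ?thesis using degS eS by (simp add: cc_def)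
    next
      case False then have "w \<in> T" using w by (simp add: T_def)
      then show ?thesis using degT eS False by (simp add: cc_def)
    qed
  qed
  have un: "{0..<n} = S \<union> T" using SS by (auto simp: T_def)
  have "(\<Sum>w\<in>{0..<n}. cc w) = (\<Sum>w\<in>S. cc w) + (\<Sum>w\<in>T. cc w)"
    unfolding un using fS dST by (simp add: sum.union_disjoint)
  also have "(\<Sum>w\<in>S. cc w) = (\<Sum>w\<in>S. card (nbrs E w \<inter> T))" by (simp add: cc_def)
  also have "(\<Sum>w\<in>T. cc w) = (\<Sum>w\<in>T. card (nbrs E w \<inter> S))"
    by (rule sum.cong) (auto simp: cc_def T_def)
  finally have sc: "(\<Sum>w\<in>{0..<n}. cc w) \<le> 2*K" using sumS sumT by linarith
  have "sum_list d' = (\<Sum>w\<in>{0..<n}. d'!w)" using ld' by (simp add: sum_list_sum_nth)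
  also have "\<dots> \<le> (\<Sum>w\<in>{0..<n}. (h - 1) + cc w)" using bnd by (intro sum_mono) auto
  also have "\<dots> = n*(h-1) + (\<Sum>w\<in>{0..<n}. cc w)" by (simp add: sum.distrib)
  finally have "sum_list d' \<le> sum_list d" using sc sd by linarith
  then show ?thesis using eq_from_sum ld ld' maj by blast
qed




definition hl :: "nat list \<Rightarrow> nat list" where
  "hl xs = concat (map (\<lambda>j. replicate (xs!j) j) [0..<length xs])"

lemma filter_count_aux:
  "length (filter (\<lambda>y. y = j) (concat (map (\<lambda>i. replicate (f i) i) [0..<r]))) = (if j < r then f j else 0)"
  by (induction r) (auto simp: filter_replicate less_Suc_eq)

lemma hl_count:
  assumes "j < length xs"
  shows "card {s. s < length (hl xs) \<and> hl xs ! s = j} = xs ! j"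
proof -
  have "card {s. s < length (hl xs) \<and> hl xs ! s = j} = length (filter (\<lambda>y. y = j) (hl xs))"
    by (rule length_filter_conv_card[symmetric])
  also have "\<dots> = xs ! j" unfolding hl_def using filter_count_aux[of j "\<lambda>i. xs!i" "length xs"] assms by simp
  finally show ?thesis .
qed

lemma sum_list_upt_nth: "sum_list (map (\<lambda>j. xs ! j) [0..<length xs]) = sum_list xs"
  by (metis map_nth map_eq_conv)

lemma hl_length: "length (hl xs) = sum_list xs"
  unfolding hl_def by (simp add: length_concat comp_def sum_list_upt_nth)

lemma hl_set: "s < length (hl xs) \<Longrightarrow> hl xs ! s < length xs"
proof -
  assume "s < length (hl xs)"
  then have "hl xs ! s \<in> set (hl xs)" by simp
  then show ?thesis unfolding hl_def by auto
qed

lemma length_le_sum: "\<forall>x\<in>set xs. 0 < (x::nat) \<Longrightarrow> length xs \<le> sum_list xs"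
  by (induction xs) auto

lemma sum_list_shift: "sum_list (map (\<lambda>x. c + x) xs) = length xs * c + sum_list (xs::nat list)"
  by (induction xs) auto

definition clique :: "nat set \<Rightarrow> nat set set" where
  "clique A = {{a,b} | a b. a \<in> A \<and> b \<in> A \<and> a \<noteq> b}"

lemma clique_mem: "{v,u} \<in> clique A \<longleftrightarrow> v \<in> A \<and> u \<in> A \<and> v \<noteq> u"
  unfolding clique_def by (auto simp: doubleton_eq_iff)




definition GA :: "nat \<Rightarrow> nat \<Rightarrow> nat list \<Rightarrow> nat set" where
  "GA h K xs = {h - K..<2*h - length xs - K} \<union> {2*h - length xs..<2*h}"
definition GB :: "nat \<Rightarrow> nat \<Rightarrow> nat list \<Rightarrow> nat set" where
  "GB h K xs = {0..<h - K} \<union> {2*h - length xs - K..<2*h - length xs}"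
definition cross :: "nat \<Rightarrow> nat \<Rightarrow> nat list \<Rightarrow> nat set set" where
  "cross h K xs = (\<lambda>s. {2*h - length xs - K + s, 2*h - length xs + hl xs ! s}) ` {..<K}"
definition G :: "nat \<Rightarrow> nat \<Rightarrow> nat list \<Rightarrow> nat set set" where
  "G h K xs = clique (GA h K xs) \<union> clique (GB h K xs) \<union> cross h K xs"
definition dseq :: "nat \<Rightarrow> nat \<Rightarrow> nat list \<Rightarrow> nat list" where
  "dseq h K xs = replicate (2*h - length xs - K) (h - 1) @ replicate K h @ map (\<lambda>x. h - 1 + x) xs"

context
  fixes h K :: nat and xs :: "nat list"
  assumes hK: "h \<ge> 2*K+1" and K1: "K \<ge> 1"
    and pos: "\<forall>x\<in>set xs. 0 < x" and sx: "sum_list xs = K"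
begin

definition "r = length xs"
definition "p = 2*h - r - K"
definition "q = 2*h - r"

lemma rK: "r \<le> K" using length_le_sum[OF pos] sx by (simp add: r_def)
lemma pq: "p + K = q" using rK hK by (simp add: p_def q_def)
lemma qr: "q + r = 2*h" using rK hK by (simp add: q_def)
lemma hKp: "h - K < p" using rK hK by (simp add: p_def)
lemma hlK: "length (hl xs) = K" using sx by (simp add: hl_length)
lemma hlr: "s < K \<Longrightarrow> hl xs ! s < r" using hl_set hlK by (simp add: r_def)

lemma GA_eq: "GA h K xs = {h - K..<p} \<union> {q..<2*h}" by (simp add: GA_def p_def q_def r_def)
lemma GB_eq: "GB h K xs = {0..<h - K} \<union> {p..<q}" by (simp add: GB_def p_def q_def r_def)
lemma cross_eq: "cross h K xs = (\<lambda>s. {p + s, q + hl xs ! s}) ` {..<K}"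
  by (simp add: cross_def p_def q_def r_def)

lemma card_GA: "card (GA h K xs) = h"
proof -
  have "card ({h - K..<p} \<union> {q..<2*h}) = card {h - K..<p} + card {q..<2*h}"
    using pq by (intro card_Un_disjoint) auto
  then show ?thesis unfolding GA_eq using pq qr hKp rK hK by simp
qed

lemma card_GB: "card (GB h K xs) = h"
proof -
  have "card ({0..<h - K} \<union> {p..<q}) = card {0..<h - K} + card {p..<q}"
    using hKp by (intro card_Un_disjoint) auto
  then show ?thesis unfolding GB_eq using pq hK by simp
qed

lemma nbrs_mem: "u \<in> nbrs (G h K xs) v \<longleftrightarrow>
   (v \<in> GA h K xs \<and> u \<in> GA h K xs \<and> v \<noteq> u) \<or> (v \<in> GB h K xs \<and> u \<in> GB h K xs \<and> v \<noteq> u) \<or>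
   (\<exists>s<K. (v = p + s \<and> u = q + hl xs ! s) \<or> (v = q + hl xs ! s \<and> u = p + s))"
  unfolding nbrs_def G_def cross_eq by (auto simp: clique_mem doubleton_eq_iff)


lemma nb1: "v < h - K \<Longrightarrow> nbrs (G h K xs) v = GB h K xs - {v}"
  using hKp pq by (auto simp: nbrs_mem GA_eq GB_eq)

lemma nb2: "h - K \<le> v \<Longrightarrow> v < p \<Longrightarrow> nbrs (G h K xs) v = GA h K xs - {v}"
  using hKp pq by (auto simp: nbrs_mem GA_eq GB_eq)

lemma nb3: "s < K \<Longrightarrow> nbrs (G h K xs) (p + s) = (GB h K xs - {p + s}) \<union> {q + hl xs ! s}"
  using hKp pq by (auto simp: nbrs_mem GA_eq GB_eq)

lemma nb4: "j < r \<Longrightarrow> nbrs (G h K xs) (q + j) =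
   (GA h K xs - {q + j}) \<union> (\<lambda>s. p + s) ` {s. s < K \<and> hl xs ! s = j}"
  using hKp pq qr by (auto simp: nbrs_mem GA_eq GB_eq)


lemma dseq_eq: "dseq h K xs = replicate p (h - 1) @ replicate K h @ map (\<lambda>x. h - 1 + x) xs"
  by (simp add: dseq_def p_def r_def)

lemma dseq_len: "length (dseq h K xs) = 2*h"
  using pq qr by (simp add: dseq_eq r_def)

lemma dseq_nth1: "v < p \<Longrightarrow> dseq h K xs ! v = h - 1"
  by (simp add: dseq_eq nth_append)
lemma dseq_nth3: "s < K \<Longrightarrow> dseq h K xs ! (p + s) = h"
  by (simp add: dseq_eq nth_append)
lemma dseq_nth4: "j < r \<Longrightarrow> dseq h K xs ! (q + j) = h - 1 + xs ! j"
proof -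
  assume j: "j < r"
  have e: "dseq h K xs = (replicate p (h - 1) @ replicate K h) @ map (\<lambda>x. h - 1 + x) xs"
    by (simp add: dseq_eq)
  have l: "length (replicate p (h - 1) @ replicate K h) = q" using pq by simp
  show ?thesis unfolding e using j l nth_append_length_plus[of "replicate p (h - 1) @ replicate K h" "map (\<lambda>x. h - 1 + x) xs" j]
    by (simp add: r_def)
qed

lemma GA_sub: "GA h K xs \<subseteq> {..<2*h}" using pq qr by (auto simp: GA_eq)
lemma GB_sub: "GB h K xs \<subseteq> {..<2*h}" using pq qr by (auto simp: GB_eq)

lemma sg_G: "simple_graph (2*h) (G h K xs)"
  unfolding simple_graph_def
proof
  fix e assume "e \<in> G h K xs"
  then consider "e \<in> clique (GA h K xs)" | "e \<in> clique (GB h K xs)" | "e \<in> cross h K xs"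
    unfolding G_def by blast
  then show "\<exists>u v. u < 2 * h \<and> v < 2 * h \<and> u \<noteq> v \<and> e = {u, v}"
  proof cases
    case 1 then show ?thesis using GA_sub unfolding clique_def by blast
  next
    case 2 then show ?thesis using GB_sub unfolding clique_def by blast
  next
    case 3
    then obtain s where s: "s < K" "e = {p + s, q + hl xs ! s}" unfolding cross_eq by blast
    have "hl xs ! s < r" using hlr s by simp
    then show ?thesis using s pq qr by (intro exI[of _ "p + s"] exI[of _ "q + hl xs ! s"]) auto
  qed
qed

lemma fin_GAB: "finite (GA h K xs)" "finite (GB h K xs)"
  by (auto simp: GA_eq GB_eq)

lemma deg_G: "v < 2*h \<Longrightarrow> degree (G h K xs) v = dseq h K xs ! v"
proof -
  assume v: "v < 2*h"
  have dg: "degree (G h K xs) v = card (nbrs (G h K xs) v)" by (rule degree_nbrs[OF sg_G])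
  consider "v < h - K" | "h - K \<le> v \<and> v < p" | "p \<le> v \<and> v < q" | "q \<le> v" by linarith
  then show ?thesis
  proof cases
    case 1
    have "v \<in> GB h K xs" using 1 by (simp add: GB_eq)
    then show ?thesis using 1 hKp dg nb1 card_GB fin_GAB dseq_nth1 by simp
  next
    case 2
    have "v \<in> GA h K xs" using 2 by (simp add: GA_eq)
    then show ?thesis using 2 dg nb2 card_GA fin_GAB dseq_nth1 by simp
  next
    case 3
    define s where "s = v - p"
    have s: "s < K" "v = p + s" using 3 pq by (auto simp: s_def)
    have vB: "p + s \<in> GB h K xs" using 3 s by (simp add: GB_eq)
    have nB: "q + hl xs ! s \<notin> GB h K xs - {p + s}" using pq hKp by (simp add: GB_eq)
    have "card (nbrs (G h K xs) v) = card (GB h K xs - {p + s}) + 1"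
      using s nb3 nB fin_GAB by simp
    also have "\<dots> = h" using vB card_GB fin_GAB hK by simp
    finally show ?thesis using dg s dseq_nth3 by simp
  next
    case 4
    define j where "j = v - q"
    have j: "j < r" "v = q + j" using 4 v qr by (auto simp: j_def)
    have vA: "q + j \<in> GA h K xs" using j qr by (simp add: GA_eq)
    have disj: "(GA h K xs - {q + j}) \<inter> (\<lambda>s. p + s) ` {s. s < K \<and> hl xs ! s = j} = {}"
      using pq by (auto simp: GA_eq)
    have ci: "card ((\<lambda>s. p + s) ` {s. s < K \<and> hl xs ! s = j}) = xs ! j"
      using hl_count[of j xs] j hlK by (simp add: card_image r_def)
    have "card (nbrs (G h K xs) v) = card (GA h K xs - {q + j}) + xs ! j"
      using j nb4 disj ci fin_GAB by (simp add: card_Un_disjoint)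
    also have "\<dots> = h - 1 + xs ! j" using vA card_GA fin_GAB by simp
    finally show ?thesis using dg j dseq_nth4 by simp
  qed
qed

lemma realizes_G: "realizes (G h K xs) (dseq h K xs)"
  unfolding realizes_def using sg_G deg_G dseq_len by simp


lemma reach_B:
  assumes "((\<lambda>x y. {x, y} \<in> G h K xs - cross h K xs)\<^sup>*\<^sup>*) x y" "x \<in> GB h K xs"
  shows "y \<in> GB h K xs"
  using assms
proof (induction rule: rtranclp_induct)
  case base then show ?case by simp
next
  case (step y z)
  then have yB: "y \<in> GB h K xs" by simp
  have dAB: "GA h K xs \<inter> GB h K xs = {}" using pq hKp by (auto simp: GA_eq GB_eq)
  from step(2) have "{y,z} \<in> clique (GA h K xs) \<or> {y,z} \<in> clique (GB h K xs)"
    unfolding G_def by blast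
  then show ?case using yB dAB by (auto simp: clique_mem)
qed

lemma notkec: "\<not> k_edge_connected (K + 1) (2*h) (G h K xs)"
proof
  assume kec: "k_edge_connected (K + 1) (2*h) (G h K xs)"
  have sub: "cross h K xs \<subseteq> G h K xs" by (auto simp: G_def)
  have "card (cross h K xs) \<le> card {..<K}" unfolding cross_def by (rule card_image_le) simp
  then have "card (cross h K xs) < K + 1" by simp
  then have con: "connected_graph (2*h) (G h K xs - cross h K xs)" using kec sub
    unfolding k_edge_connected_def by blast
  have "0 < 2*h" "h - K < 2*h" using hK by auto
  then have "((\<lambda>x y. {x, y} \<in> G h K xs - cross h K xs)\<^sup>*\<^sup>*) 0 (h - K)"
    using con unfolding connected_graph_def by blast
  moreover have "0 \<in> GB h K xs" using hK by (simp add: GB_eq)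
  ultimately have "h - K \<in> GB h K xs" by (rule reach_B)
  then show False using hKp pq by (simp add: GB_eq)
qed

lemma dseq_sorted: "sorted xs \<Longrightarrow> sorted (dseq h K xs)"
  unfolding dseq_eq using pos by (auto simp: sorted_append sorted_map intro: sorted_wrt_mono_rel[rotated])

lemma dseq_low: "\<forall>i<2*h. h - 1 \<le> dseq h K xs ! i"
proof (intro allI impI)
  fix i assume "i < 2*h"
  then have "dseq h K xs ! i \<in> set (dseq h K xs)" using dseq_len by simp
  then show "h - 1 \<le> dseq h K xs ! i" unfolding dseq_eq by (auto split: if_splits)
qed

lemma dseq_sum: "sum_list (dseq h K xs) = 2*h*(h-1) + 2*K"
proof -
  have "sum_list (dseq h K xs) = p*(h-1) + K*h + (r*(h-1) + K)"
    unfolding dseq_eq by (simp add: sum_list_shift sx r_def sum_list_replicate)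
  also have "K*h = K*(h-1) + K" using hK by (cases h) auto
  also have "p*(h-1) + (K*(h-1) + K) + (r*(h-1) + K) = (p + K + r)*(h-1) + 2*K"
    by (simp add: algebra_simps)
  also have "p + K + r = 2*h" using pq qr by simp
  finally show ?thesis .
qed

lemma dseq_filter: "length (filter (\<lambda>x. h - 1 < x) (dseq h K xs)) = K + length xs"
proof -
  have "filter ((<) (h - 1) \<circ> (+) (h - 1)) xs = xs"
    using pos by (simp add: filter_id_conv)
  then show ?thesis unfolding dseq_eq using hK by (simp add: filter_replicate)
qed

lemma dseq_drop: "drop (2*h - length xs) (dseq h K xs) = map (\<lambda>x. h - 1 + x) xs"
proof -
  have e: "dseq h K xs = (replicate p (h - 1) @ replicate K h) @ map (\<lambda>x. h - 1 + x) xs"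
    by (simp add: dseq_eq)
  have l: "length (replicate p (h - 1) @ replicate K h) = 2*h - length xs" using pq by (simp add: q_def r_def)
  show ?thesis unfolding e using l by simp
qed

end



lemma sinks_finite: "finite (sinks P n)"
proof (rule finite_subset)
  show "sinks P n \<subseteq> {d. set d \<subseteq> {..n*n} \<and> length d = n}"
  proof
    fix d assume "d \<in> sinks P n"
    then have g: "graphical n d" by (simp add: sinks_def)
    then obtain E where re: "realizes E d" and ld: "length d = n" by (auto simp: graphical_def)
    have sg: "simple_graph n E" using re ld by (simp add: realizes_def)
    have "\<forall>x\<in>set d. x \<le> n*n"
    proof
      fix x assume "x \<in> set d"
      then obtain i where i: "i < n" "x = d!i" using ld by (auto simp: in_set_conv_nth)
      then have "x = degree E i" using re ld by (simp add: realizes_def)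
      also have "\<dots> \<le> card E" unfolding degree_def using sg_finite(1)[OF sg] by (intro card_mono) auto
      also have "\<dots> \<le> n*n" by (rule sg_finite(2)[OF sg])
      finally show "x \<le> n*n" .
    qed
    then show "d \<in> {d. set d \<subseteq> {..n*n} \<and> length d = n}" using ld by auto
  qed
  show "finite {d. set d \<subseteq> {..n*n} \<and> length d = n}" by (rule finite_lists_length_eq) simp
qed

theorem theorem3p1p3:
  fixes k n :: nat
  assumes "k \<ge> 2" and "even n" and "n \<ge> 4 * k - 2"
  shows "card (sinks (k_edge_connected k) n) \<ge> partition_count (k - 1)"
proof -
  define h where "h = n div 2"
  define K where "K = k - 1"
  have nh: "n = 2*h" using assms(2) by (simp add: h_def)
  have hK: "h \<ge> 2*K+1" using assms(1,3) nh by (simp add: K_def)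
  have K1: "K \<ge> 1" using assms(1) by (simp add: K_def)
  have kK: "k = K + 1" using assms(1) by (simp add: K_def)
  define Part where "Part = {xs :: nat list. sorted xs \<and> (\<forall>x\<in>set xs. 0 < x) \<and> sum_list xs = K}"
  have pc: "partition_count (k - 1) = card Part" by (simp add: partition_count_def Part_def K_def)
  have inj: "inj_on (dseq h K) Part"
  proof
    fix xs ys assume xs: "xs \<in> Part" and ys: "ys \<in> Part" and eq: "dseq h K xs = dseq h K ys"
    have px: "\<forall>x\<in>set xs. 0 < x" "sum_list xs = K" and py: "\<forall>x\<in>set ys. 0 < x" "sum_list ys = K"
      using xs ys by (auto simp: Part_def)
    have "K + length xs = K + length ys"
      using dseq_filter[OF hK K1 px] dseq_filter[OF hK K1 py] eq by simp
    then have l: "length xs = length ys" by simp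
    have "map (\<lambda>x. h - 1 + x) xs = map (\<lambda>x. h - 1 + x) ys"
      using dseq_drop[OF hK K1 px] dseq_drop[OF hK K1 py] eq l by metis
    then show "xs = ys" by (simp add: inj_map_eq_map inj_def)
  qed
  have img: "dseq h K ` Part \<subseteq> sinks (k_edge_connected k) n"
  proof
    fix d assume "d \<in> dseq h K ` Part"
    then obtain xs where xs: "xs \<in> Part" and d: "d = dseq h K xs" by blast
    have px: "\<forall>x\<in>set xs. 0 < x" "sum_list xs = K" "sorted xs" using xs by (auto simp: Part_def)
    have ld: "length d = n" using dseq_len[OF hK K1 px(1,2)] d nh by simp
    have re: "realizes (G h K xs) d" using realizes_G[OF hK K1 px(1,2)] d by simp
    have gr: "graphical n d" unfolding graphical_def using ld re dseq_sorted[OF hK K1 px(1,2,3)] d by blast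
    have nf: "\<not> forcibly (k_edge_connected k) d"
      unfolding forcibly_def using re ld notkec[OF hK K1 px(1,2)] kK nh by auto
    have mx: "\<not> (\<exists>d'. graphical n d' \<and> \<not> forcibly (k_edge_connected k) d' \<and> d' \<noteq> d \<and> majorizes d' d)"
    proof
      assume "\<exists>d'. graphical n d' \<and> \<not> forcibly (k_edge_connected k) d' \<and> d' \<noteq> d \<and> majorizes d' d"
      then obtain d' where g': "graphical n d'" and nf': "\<not> forcibly (k_edge_connected k) d'"
        and ne: "d' \<noteq> d" and mj: "majorizes d' d" by blast
      have ld': "length d' = n" using g' by (simp add: graphical_def)
      obtain E where rE: "realizes E d'" and nk: "\<not> k_edge_connected k n E"
        using nf' ld' unfolding forcibly_def by auto
      obtain F where FE: "F \<subseteq> E" and cF: "card F < k" and nc: "\<not> connected_graph n (E - F)"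
        using nk unfolding k_edge_connected_def by blast
      have "d' = d"
      proof (rule upper[OF nh hK K1 ld])
        show "\<forall>i<n. h - 1 \<le> d ! i" using dseq_low[OF hK K1 px(1,2)] d nh by simp
        show "sum_list d = n * (h - 1) + 2 * K" using dseq_sum[OF hK K1 px(1,2)] d nh by simp
        show "realizes E d'" by (rule rE)
        show "length d' = n" by (rule ld')
        show "F \<subseteq> E" by (rule FE)
        show "card F \<le> K" using cF kK by simp
        show "\<not> connected_graph n (E - F)" by (rule nc)
        show "\<forall>i<n. d ! i \<le> d' ! i" using mj ld by (simp add: majorizes_def)
      qed
      then show False using ne by simp
    qed
    show "d \<in> sinks (k_edge_connected k) n" unfolding sinks_def using gr nf mx by blast
  qed
  have "card Part \<le> card (sinks (k_edge_connected k) n)"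
    by (rule card_inj_on_le[OF inj img sinks_finite])
  then show ?thesis using pc by simp
qed


end
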